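(* Consider scheduling a single task on $n=2$ machines without payments, in the model where machines are bound by their declarations (described in the context). Fix constants $L>2$ and $c>1$, and let $\mathcal A^{(2)}_{L,c}$ be the following randomized allocation rule. Given declarations, call the machine with the smaller declaration machine $1$ and the other machine $2$, so that $\hat t_1\le \hat t_2$. Then machine $1$ receives the task with probability $a_1$ and machine $2$ with probability $a_2=1-a_1$, where: (i) if $\hat t_1=\hat t_2$: $a_1=a_2=\tfrac12$; (ii) if $\hat t_1<\hat t_2<c\,\hat t_1$: $a_1=\tfrac1L$, $a_2=1-\tfrac1L$; (iii) if $c\,\hat t_1\le \hat t_2$: $a_1=1-\tfrac{1}{L}\tfrac{\hat t_1}{\hat t_2}$, $a_2=\tfrac1L\tfrac{\hat t_1}{\hat t_2}$. Then the pure Price of Anarchy of $\mathcal A^{(2)}_{L,c}$ is at most $1+\frac1L$.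
   Context: Model: there are $n$ machines and one task. Machine $i$ has a private true execution time $t_i\ge 0$ for the task and reports a declaration $\hat t_i\ge 0$. A (randomized) allocation rule maps the declaration vector $\hat{\mathbf t}$ to probabilities $a_i(\hat{\mathbf t})$ with $\sum_i a_i=1$; no payments are used. Machines are bound by their declarations: if machine $i$ gets the task she executes it for time $\max\{\hat t_i,t_i\}$. Hence the (expected) cost of machine $i$ is $C_i(\hat{\mathbf t})=a_i(\hat{\mathbf t})\max\{\hat t_i,t_i\}$, and the makespan (which for one task equals the expected execution time of the task) is $\mathcal M(\hat{\mathbf t})=\sum_i a_i(\hat{\mathbf t})\max\{\hat t_i,t_i\}$. A pure Nash equilibrium is a deterministic declaration vector $\hat{\mathbf t}$ such that for every machine $i$ and every alternative declaration $x\ge 0$, $C_i(\hat{\mathbf t})\le C_i(x,\hat{\mathbf t}_{-i})$. The pure Price of Anarchy of a rule is the supremum, over all true instances $\mathbf t$, of the ratio of the makespan of the worst pure Nash equilibrium to the optimal makespan $\min_i t_i$ (the best centralized allocation with respect to the true times). *)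

theory Defs
  imports Main "HOL.Real"
begin

text \<open>Two machines, indexed by bool-free pairs: declarations d1 d2, true times t1 t2.
  alloc L c x y = probability that the machine declaring x gets the task when the
  other machine declares y, under the rule A^(2)_{L,c}.\<close>

definition alloc :: "real \<Rightarrow> real \<Rightarrow> real \<Rightarrow> real \<Rightarrow> real" where
  "alloc L c x y =
     (if x = y then 1/2
      else if x < y then
        (if y < c * x then 1 / L else 1 - (1 / L) * (x / y))
      else
        (if x < c * y then 1 - 1 / L else (1 / L) * (y / x)))"

definition cost :: "real \<Rightarrow> real \<Rightarrow> real \<Rightarrow> real \<Rightarrow> real \<Rightarrow> real" where
  "cost L c t x y = alloc L c x y * max x t"

definition makespan :: "real \<Rightarrow> real \<Rightarrow> real \<Rightarrow> real \<Rightarrow> real \<Rightarrow> real \<Rightarrow> real" where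
  "makespan L c t1 t2 d1 d2 = alloc L c d1 d2 * max d1 t1 + alloc L c d2 d1 * max d2 t2"

definition pure_NE :: "real \<Rightarrow> real \<Rightarrow> real \<Rightarrow> real \<Rightarrow> real \<Rightarrow> real \<Rightarrow> bool" where
  "pure_NE L c t1 t2 d1 d2 \<longleftrightarrow> d1 \<ge> 0 \<and> d2 \<ge> 0 \<and>
     (\<forall>x\<ge>0. cost L c t1 d1 d2 \<le> cost L c t1 x d2) \<and>
     (\<forall>x\<ge>0. cost L c t2 d2 d1 \<le> cost L c t2 x d1)"

end

theory Submission
  imports Defs
begin

lemma ordered_case:
  fixes L c t1 t2 d1 d2 :: real
  assumes L: "L > 2" and c: "c > 1"
    and t1: "t1 \<ge> 0" and t2: "t2 \<ge> 0"
    and NE: "pure_NE L c t1 t2 d1 d2" and le: "d1 \<le> d2"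
  shows "makespan L c t1 t2 d1 d2 \<le> (1 + 1 / L) * min t1 t2"
proof -
  have d1: "d1 \<ge> 0" and d2: "d2 \<ge> 0"
    and N1: "\<And>x. x \<ge> 0 \<Longrightarrow> cost L c t1 d1 d2 \<le> cost L c t1 x d2"
    and N2: "\<And>x. x \<ge> 0 \<Longrightarrow> cost L c t2 d2 d1 \<le> cost L c t2 x d1"
    using NE unfolding pure_NE_def by auto
  have Lp: "L > 0" using L by simp
  have iL: "1 / L < 1/2" using L by (simp add: divide_simps)
  show ?thesis
  proof (cases "d1 = d2")
    case True
    have "d1 = 0"
    proof (rule ccontr)
      assume "d1 \<noteq> 0"
      hence dp: "d1 > 0" using d1 by simp
      define x where "x = (d1 + d1/c)/2"
      have x1: "x < d1" "d1 < c * x" "x \<ge> 0" using dp c unfolding x_def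
        by (auto simp: field_simps)
      have "cost L c t1 x d2 = (1/L) * max x t1"
        using x1 True unfolding cost_def alloc_def by auto
      also have "\<dots> \<le> (1/L) * max d1 t1" using x1 Lp
        by (intro mult_left_mono) auto
      also have "\<dots> < (1/2) * max d1 t1" using iL dp
        by (intro mult_strict_right_mono) auto
      also have "\<dots> = cost L c t1 d1 d2" using True unfolding cost_def alloc_def by simp
      finally show False using N1[OF x1(3)] by simp
    qed
    have a: "cost L c t1 1 d2 = 0" "cost L c t2 1 d1 = 0"
      using True \<open>d1 = 0\<close> unfolding cost_def alloc_def by auto
    have "cost L c t1 d1 d2 = t1/2" "cost L c t2 d2 d1 = t2/2"
      using True \<open>d1 = 0\<close> t1 t2 unfolding cost_def alloc_def by auto
    hence "t1 = 0" "t2 = 0" using N1[of 1] N2[of 1] a t1 t2 by auto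
    thus ?thesis using True \<open>d1 = 0\<close> unfolding makespan_def by simp
  next
    case False
    hence lt: "d1 < d2" using le by simp
    show ?thesis
    proof (cases "d2 < c * d1")
      case True
      define x where "x = c*d1 + t2 + d2"
      have x1: "x > d1" "\<not> x < c * d1" "x \<ge> 0" "x \<ge> t2" using lt c d1 t2 mult_right_mono[of 1 c d1] unfolding x_def
        by auto
      have "cost L c t2 x d1 = (1/L) * (d1/x) * x"
        using x1 unfolding cost_def alloc_def by auto
      also have "\<dots> = d1 / L" using x1 lt d1 by auto
      also have "\<dots> \<le> (1/L) * d2" using lt Lp by (simp add: divide_right_mono)
      also have "\<dots> < (1 - 1/L) * d2" using lt iL d1 by (intro mult_strict_right_mono) auto
      also have "\<dots> \<le> (1 - 1/L) * max d2 t2" using iL by (intro mult_left_mono) auto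
      also have "\<dots> = cost L c t2 d2 d1" using lt True unfolding cost_def alloc_def by auto
      finally show ?thesis using N2[OF x1(3)] by simp
    next
      case False
      hence cd: "c * d1 \<le> d2" by simp
      have d2p: "d2 > 0" using lt d1 by simp
      have A1: "alloc L c d1 d2 = 1 - (1/L) * (d1/d2)" using lt False unfolding alloc_def by auto
      have A2: "alloc L c d2 d1 = (1/L) * (d1/d2)" using lt False unfolding alloc_def by auto
      have r1: "d1 / d2 \<le> 1" using lt d2p by simp
      have cur1: "cost L c t1 d1 d2 \<ge> (1 - 1/L) * t1"
      proof -
        have "(1/L) * (d1/d2) \<le> 1/L" using r1 Lp by (simp add: divide_simps)
        hence "1 - 1/L \<le> 1 - (1/L) * (d1/d2)" by simp
        moreover have "0 \<le> 1 - 1/L" using iL by simp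
        ultimately show ?thesis unfolding cost_def A1 using t1
          by (intro mult_mono) auto
      qed
      have ct1: "c * t1 \<le> d2"
      proof (rule ccontr)
        assume "\<not> c * t1 \<le> d2"
        hence h: "d2 < c * t1" by simp
        have "t1 \<noteq> 0" using h d2p by auto
        hence t1p: "t1 > 0" using t1 by simp
        have "(1/L) * t1 < (1 - 1/L) * t1" using iL t1p by (intro mult_strict_right_mono) auto
        hence lowcur: "(1/L) * t1 < cost L c t1 d1 d2" using cur1 by simp
        show False
        proof (cases "t1 < d2")
          case True
          have "cost L c t1 t1 d2 = (1/L) * t1" using True h unfolding cost_def alloc_def by auto
          thus False using N1[OF t1] lowcur by simp
        next
          case False
          define x where "x = c * t1"
          have ct: "t1 < c * t1" using c t1p by simp
          have cc: "c * d2 \<le> c * t1" using False c by (intro mult_left_mono) auto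
          have x1: "x > d2" "\<not> x < c * d2" "x \<ge> 0" "x \<ge> t1" using False ct cc t1p unfolding x_def
            by linarith+
          have "cost L c t1 x d2 = (1/L) * (d2/x) * x"
            using x1 unfolding cost_def alloc_def by auto
          also have "\<dots> = (1/L) * d2" using x1 d2p by auto
          also have "\<dots> \<le> (1/L) * t1" using False Lp by (simp add: divide_right_mono)
          finally show False using N1[OF x1(3)] lowcur by simp
        qed
      qed
      have eq1: "d1 = t1"
      proof (rule ccontr)
        assume ne: "d1 \<noteq> t1"
        have "t1 < d2 \<or> t1 = 0"
        proof (cases "t1 = 0")
          case False
          hence "t1 < c * t1" using c t1 by simp
          thus ?thesis using ct1 by simp
        qed simp
        hence reg: "\<not> d2 < c * t1" "t1 < d2 \<or> t1 = 0" using ct1 by auto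
        have dev: "cost L c t1 t1 d2 = (1 - (1/L) * (t1/d2)) * t1"
          using reg d2p unfolding cost_def alloc_def by auto
        have "cost L c t1 d1 d2 = (1 - (1/L) * (d1/d2)) * max d1 t1"
          unfolding cost_def A1 ..
        show False
        proof (cases "d1 < t1")
          case True
          have "(1/L) * (d1/d2) < (1/L) * (t1/d2)" using True d2p Lp
            by (simp add: divide_strict_right_mono)
          hence "(1 - (1/L) * (t1/d2)) * t1 < (1 - (1/L) * (d1/d2)) * t1"
            using True d1 by (intro mult_strict_right_mono) auto
          moreover have "cost L c t1 d1 d2 = (1 - (1/L) * (d1/d2)) * t1"
            using True unfolding cost_def A1 by simp
          ultimately show False using N1[OF t1] dev by linarith
        next
          case False
          hence gt: "t1 < d1" using ne by simp
          have "2 * d1 \<le> c * d1 * 2 / c * 1" using c by simp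
          have key: "d1 + t1 < L * d2"
          proof -
            have "d1 + t1 < 2 * d1" using gt by simp
            also have "\<dots> \<le> 2 * d2" using lt by simp
            also have "\<dots> < L * d2" using L d2p by simp
            finally show ?thesis .
          qed
          have "(1 - (1/L) * (t1/d2)) * t1 < (1 - (1/L) * (d1/d2)) * d1"
          proof -
            have "(d1 - t1) * (d1 + t1) < (d1 - t1) * (L * d2)"
              using key gt by (intro mult_strict_left_mono) auto
            hence "d1*d1 - t1*t1 < L*d2*d1 - L*d2*t1" by (simp add: algebra_simps)
            hence "t1 * (L*d2) - t1*t1 < d1*(L*d2) - d1*d1" by (simp add: algebra_simps)
            hence "(t1 * (L*d2) - t1*t1) / (L*d2) < (d1*(L*d2) - d1*d1) / (L*d2)"
              using Lp d2p by (intro divide_strict_right_mono) auto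
            thus ?thesis using Lp d2p by (simp add: field_simps)
          qed
          moreover have "cost L c t1 d1 d2 = (1 - (1/L) * (d1/d2)) * d1"
            using gt unfolding cost_def A1 by simp
          ultimately show False using N1[OF t1] dev by linarith
        qed
      qed
      show ?thesis
      proof (cases "d1 = 0")
        case True
        thus ?thesis using eq1 t2 unfolding makespan_def A1 A2 by simp
      next
        case False
        hence d1p: "d1 > 0" using d1 by simp
        have cur2: "cost L c t2 d2 d1 \<ge> d1 / L"
        proof -
          have "cost L c t2 d2 d1 = (1/L) * (d1/d2) * max d2 t2" unfolding cost_def A2 ..
          also have "\<dots> \<ge> (1/L) * (d1/d2) * d2" using d1 d2p Lp
            by (intro mult_left_mono) auto
          finally show ?thesis using d2p by simp
        qed
        have t2d1: "t2 \<ge> d1"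
        proof (rule ccontr)
          assume "\<not> t2 \<ge> d1"
          hence h: "t2 < d1" by simp
          define m where "m = max t2 (d1/c)"
          define x where "x = (m + d1)/2"
          have dc: "d1 / c < d1" using c d1p by (simp add: divide_simps)
          have m1: "m < d1" using h dc unfolding m_def by simp
          have m2: "t2 \<le> m" "d1/c \<le> m" unfolding m_def by simp_all
          have x1a: "x < d1" using m1 unfolding x_def by (simp add: field_simps)
          have mx: "m < x" using m1 unfolding x_def by (simp add: field_simps)
          have x1b: "d1/c < x" using order.strict_trans1[OF m2(2) mx] .
          have x1c: "x \<ge> 0" using m2 t2 d1p unfolding x_def by (simp add: field_simps)
          have x1d: "x \<ge> t2" using m1 m2 unfolding x_def by (simp add: field_simps)
          note x1 = x1a x1b x1c x1d
          have x2: "d1 < c * x" using x1(2) c by (simp add: divide_simps mult.commute)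
          have "cost L c t2 x d1 = (1/L) * max x t2" using x1 x2 unfolding cost_def alloc_def by auto
          also have "\<dots> = (1/L) * x" using x1 by simp
          also have "\<dots> < d1 / L" using x1 Lp by (simp add: divide_strict_right_mono)
          finally show False using N2[OF x1(3)] cur2 by simp
        qed
        have t2d2: "t2 \<le> d2"
        proof (rule ccontr)
          assume "\<not> t2 \<le> d2"
          hence h: "t2 > d2" by simp
          have reg: "d1 < t2" "\<not> t2 < c * d1" using h lt cd by auto
          have "cost L c t2 t2 d1 = (1/L) * (d1/t2) * t2" using reg unfolding cost_def alloc_def by auto
          also have "\<dots> = d1 / L" using h d2p by simp
          also have "\<dots> < (1/L) * (d1/d2) * t2"
          proof -
            have "d1 * d2 < d1 * t2" using d1p h by simp
            hence "d1 / L < d1 * t2 / (L * d2)" using Lp d2p by (simp add: field_simps)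
            thus ?thesis by simp
          qed
          also have "\<dots> = cost L c t2 d2 d1" using h unfolding cost_def A2 by simp
          finally show False using N2[OF t2] by simp
        qed
        have "makespan L c t1 t2 d1 d2 = (1 - (1/L) * (t1/d2)) * t1 + (1/L) * (t1/d2) * d2"
          unfolding makespan_def A1 A2 using eq1 t2d2 by simp
        also have "\<dots> \<le> (1 + 1/L) * t1"
        proof -
          have "(1/L) * (t1/d2) * t1 \<ge> 0" using t1 Lp d2p by simp
          thus ?thesis using d2p by (simp add: algebra_simps)
        qed
        also have "\<dots> = (1 + 1/L) * min t1 t2" using t2d1 eq1 by simp
        finally show ?thesis .
      qed
    qed
  qed
qed

theorem theorem1:
  fixes L c t1 t2 d1 d2 :: real
  assumes "L > 2" and "c > 1"
    and "t1 \<ge> 0" and "t2 \<ge> 0"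
    and "pure_NE L c t1 t2 d1 d2"
  shows "makespan L c t1 t2 d1 d2 \<le> (1 + 1 / L) * min t1 t2"
proof (cases "d1 \<le> d2")
  case True
  thus ?thesis using ordered_case assms by blast
next
  case False
  have "pure_NE L c t2 t1 d2 d1" using assms(5) unfolding pure_NE_def by auto
  hence "makespan L c t2 t1 d2 d1 \<le> (1 + 1 / L) * min t2 t1"
    using ordered_case assms False by simp
  thus ?thesis unfolding makespan_def by (simp add: min.commute add.commute)
qed

end
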